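(* Let $A$ be a normal tensor with bond dimension $D_{\mathbb{1}}$ and injectivity length $L_I$, and let $|\psi\rangle=|\psi_N(A)\rangle$ be the translationally invariant MPS it generates on $N$ sites. Suppose $|\psi\rangle$ has the exact MPS-up$_{0,D}$ property and $N > L_I(\log_2 D + 1)$. Then $|\psi\rangle$ is a product state, $|\psi\rangle = |\phi\rangle^{\otimes N}$ for some $|\phi\rangle\in\mathbb{C}^d$.
   Context: An MPS on $N$ sites with physical dimension $d$ is $|\psi\rangle=\sum_{i_1,\dots,i_N=1}^d \mathrm{Tr}[A^{[1],i_1}\cdots A^{[N],i_N}]|i_1\dots i_N\rangle$, where $A^{[n],i}$ are $D_n\times D_{n+1}$ complex matrices ($D_{N+1}=D_1$); it is translationally invariant (TI), written $|\psi_N(A)\rangle$, if all $A^{[n]}=A$ with $A^i\in\mathcal{M}_{D_{\mathbb{1}}}(\mathbb{C})$. A tensor $A$ is normal if the matrices $\{A^i\}$ have no nontrivial common invariant subspace and the completely positive map $\mathcal{E}(X)=\sum_i A^iX(A^i)^\dagger$ has a unique eigenvalue of largest magnitude, equal to $1$. Blocking $L$ sites gives the tensor with matrices $A^{i_1}\cdots A^{i_L}$ indexed by $(i_1,\dots,i_L)$; a tensor is injective if the map $X\mapsto\sum_{i}\mathrm{Tr}[XA^{i}]|i\rangle$ from $\mathcal{M}_{D_{\mathbb{1}}}(\mathbb{C})$ to the physical space is injective. The injectivity length $L_I$ of a normal tensor is the number of sites after whose blocking the tensor becomes injective (injectivity then persists for larger blocks). A state $|\psi\rangle\in(\mathbb{C}^d)^{\otimes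 N}$ is an MPS-up$_{\varepsilon,D}$ if for every permutation $\pi$ of the $N$ sites, with $U_\pi$ the unitary permuting the tensor factors accordingly, there is an MPS state (open boundary, bond dimensions at most $D$) $|\psi_\pi\rangle$ with $\|U_\pi|\psi\rangle-|\psi_\pi\rangle\|\le\varepsilon$; equivalently, for every bipartition of the sites there is a state $\varepsilon$-close to $|\psi\rangle$ with Schmidt rank at most $D$ across it. Exact MPS-up means $\varepsilon=0$, i.e. Schmidt rank at most $D$ across every bipartition. *)

theory Defs
  imports Complex_Main "Jordan_Normal_Form.Matrix" "Jordan_Normal_Form.Schur_Decomposition"
begin

text \<open>A state of (C^d)^{N} is a function from configurations to complex amplitudes.\<close>

definition tensor :: "nat \<Rightarrow> nat \<Rightarrow> (nat \<Rightarrow> complex mat) \<Rightarrow> bool" where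
  "tensor d D A \<longleftrightarrow> (\<forall>i<d. A i \<in> carrier_mat D D)"

definition configs :: "nat \<Rightarrow> nat \<Rightarrow> (nat \<Rightarrow> nat) set" where
  "configs d N = {i. (\<forall>n<N. i n < d) \<and> (\<forall>n\<ge>N. i n = 0)}"

definition mtrace :: "complex mat \<Rightarrow> complex" where
  "mtrace M = (\<Sum>k<dim_row M. M $$ (k, k))"

definition word_prod :: "nat \<Rightarrow> (nat \<Rightarrow> complex mat) \<Rightarrow> nat \<Rightarrow> (nat \<Rightarrow> nat) \<Rightarrow> complex mat" where
  "word_prod D A L w = foldr (\<lambda>n M. A (w n) * M) [0..<L] (1\<^sub>m D)"

definition ti_mps :: "nat \<Rightarrow> (nat \<Rightarrow> complex mat) \<Rightarrow> nat \<Rightarrow> (nat \<Rightarrow> nat) \<Rightarrow> complex" where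
  "ti_mps D A N i = mtrace (word_prod D A N i)"

definition subspace_vec :: "nat \<Rightarrow> complex vec set \<Rightarrow> bool" where
  "subspace_vec D V \<longleftrightarrow> V \<subseteq> carrier_vec D \<and> 0\<^sub>v D \<in> V \<and>
     (\<forall>u\<in>V. \<forall>v\<in>V. u + v \<in> V) \<and> (\<forall>c. \<forall>v\<in>V. c \<cdot>\<^sub>v v \<in> V)"

definition transfer_map :: "nat \<Rightarrow> nat \<Rightarrow> (nat \<Rightarrow> complex mat) \<Rightarrow> complex mat \<Rightarrow> complex mat" where
  "transfer_map d D A X = foldr (\<lambda>i M. A i * X * mat_adjoint (A i) + M) [0..<d] (0\<^sub>m D D)"

definition transfer_eigenvalue :: "nat \<Rightarrow> nat \<Rightarrow> (nat \<Rightarrow> complex mat) \<Rightarrow> complex \<Rightarrow> bool" where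
  "transfer_eigenvalue d D A lam \<longleftrightarrow>
     (\<exists>X \<in> carrier_mat D D. X \<noteq> 0\<^sub>m D D \<and> transfer_map d D A X = lam \<cdot>\<^sub>m X)"

definition normal_tensor :: "nat \<Rightarrow> nat \<Rightarrow> (nat \<Rightarrow> complex mat) \<Rightarrow> bool" where
  "normal_tensor d D A \<longleftrightarrow> tensor d D A \<and>
     (\<forall>V. subspace_vec D V \<and> (\<forall>i<d. \<forall>v\<in>V. A i *\<^sub>v v \<in> V) \<longrightarrow> V = {0\<^sub>v D} \<or> V = carrier_vec D) \<and>
     transfer_eigenvalue d D A 1 \<and>
     (\<forall>lam. transfer_eigenvalue d D A lam \<and> lam \<noteq> 1 \<longrightarrow> cmod lam < 1)"

definition injective_block :: "nat \<Rightarrow> nat \<Rightarrow> (nat \<Rightarrow> complex mat) \<Rightarrow> nat \<Rightarrow> bool" where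
  "injective_block d D A L \<longleftrightarrow>
     inj_on (\<lambda>X. \<lambda>w \<in> configs d L. mtrace (X * word_prod D A L w)) (carrier_mat D D)"

definition injectivity_length :: "nat \<Rightarrow> nat \<Rightarrow> (nat \<Rightarrow> complex mat) \<Rightarrow> nat \<Rightarrow> bool" where
  "injectivity_length d D A L \<longleftrightarrow> L \<ge> 1 \<and> (\<forall>L'\<ge>L. injective_block d D A L') \<and>
     (\<forall>L'. 1 \<le> L' \<and> L' < L \<longrightarrow> \<not> injective_block d D A L')"

definition schmidt_rank_le :: "nat \<Rightarrow> nat \<Rightarrow> ((nat \<Rightarrow> nat) \<Rightarrow> complex) \<Rightarrow> nat set \<Rightarrow> nat \<Rightarrow> bool" where
  "schmidt_rank_le d N psi S D \<longleftrightarrow>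
     (\<exists>u v :: nat \<Rightarrow> (nat \<Rightarrow> nat) \<Rightarrow> complex. \<forall>i\<in>configs d N.
        psi i = (\<Sum>k<D. u k (\<lambda>n. if n \<in> S then i n else 0) * v k (\<lambda>n. if n \<in> S then 0 else i n)))"

definition exact_mps_up :: "nat \<Rightarrow> nat \<Rightarrow> ((nat \<Rightarrow> nat) \<Rightarrow> complex) \<Rightarrow> nat \<Rightarrow> bool" where
  "exact_mps_up d N psi D \<longleftrightarrow> (\<forall>S \<subseteq> {0..<N}. schmidt_rank_le d N psi S D)"

end

theory Submission
  imports Defs "HOL-Library.Function_Algebras"
begin

definition trunc :: "nat \<Rightarrow> (nat\<Rightarrow>nat) \<Rightarrow> (nat\<Rightarrow>nat)" where
  "trunc l i = (\<lambda>n. if n < l then i n else 0)"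
definition shift :: "nat \<Rightarrow> (nat\<Rightarrow>nat) \<Rightarrow> (nat\<Rightarrow>nat)" where
  "shift l i = (\<lambda>n. i (n + l))"
definition join :: "nat \<Rightarrow> (nat\<Rightarrow>nat) \<Rightarrow> (nat\<Rightarrow>nat) \<Rightarrow> (nat\<Rightarrow>nat)" where
  "join a x y = (\<lambda>n. if n < a then x n else y (n - a))"

lemma word_prod_0: "word_prod D A 0 i = 1\<^sub>m D"
  by (simp add: word_prod_def)

lemma word_prod_Suc: "word_prod D A (Suc l) i = A (i 0) * word_prod D A l (shift 1 i)"
proof -
  have "[0..<Suc l] = 0 # map Suc [0..<l]" by (simp add: map_Suc_upt upt_conv_Cons)
  then show ?thesis unfolding word_prod_def shift_def by (simp add: foldr_map o_def)
qed

lemma configs_Suc: "i \<in> configs d (Suc l) \<Longrightarrow> i 0 < d \<and> shift 1 i \<in> configs d l"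
  by (auto simp: configs_def shift_def)

lemma word_prod_carrier': "tensor d D A \<Longrightarrow> \<forall>n<l. i n < d \<Longrightarrow> word_prod D A l i \<in> carrier_mat D D"
proof (induction l arbitrary: i)
  case 0 then show ?case by (simp add: word_prod_0)
next
  case (Suc l)
  have "\<forall>n<l. shift 1 i n < d" using Suc.prems(2) by (simp add: shift_def)
  from Suc.IH[OF Suc.prems(1) this] Suc.prems show ?case
    by (auto simp: word_prod_Suc tensor_def)
qed

lemma word_prod_carrier: "tensor d D A \<Longrightarrow> i \<in> configs d l \<Longrightarrow> word_prod D A l i \<in> carrier_mat D D"
  by (rule word_prod_carrier') (auto simp: configs_def)

lemma word_prod_cong: "(\<And>n. n < l \<Longrightarrow> i n = i' n) \<Longrightarrow> word_prod D A l i = word_prod D A l i'"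
proof (induction l arbitrary: i i')
  case 0 then show ?case by (simp add: word_prod_0)
next
  case (Suc l)
  have "word_prod D A l (shift 1 i) = word_prod D A l (shift 1 i')"
    by (rule Suc.IH) (simp add: shift_def Suc.prems)
  then show ?case using Suc.prems by (simp add: word_prod_Suc)
qed

lemma shift_shift: "shift a (shift b i) = shift (a + b) i"
  by (simp add: shift_def ac_simps)

lemma word_prod_split: "tensor d D A \<Longrightarrow> i \<in> configs d (a + b) \<Longrightarrow>
  word_prod D A (a + b) i = word_prod D A a i * word_prod D A b (shift a i)"
proof (induction a arbitrary: i)
  case 0
  have "shift 0 i = i" by (simp add: shift_def)
  then show ?case using word_prod_carrier[OF 0(1), of i b] 0(2) by (simp add: word_prod_0)
next
  case (Suc a)
  have c: "i 0 < d" "shift 1 i \<in> configs d (a + b)" using configs_Suc[of i d "a+b"] Suc.prems by auto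
  have ca: "word_prod D A a (shift 1 i) \<in> carrier_mat D D"
    using Suc.prems by (intro word_prod_carrier') (auto simp: configs_def shift_def)
  have cb: "word_prod D A b (shift (Suc a) i) \<in> carrier_mat D D"
    using Suc.prems by (intro word_prod_carrier') (auto simp: configs_def shift_def)
  have "word_prod D A (Suc a + b) i = A (i 0) * word_prod D A (a + b) (shift 1 i)"
    by (simp add: word_prod_Suc)
  also have "\<dots> = A (i 0) * (word_prod D A a (shift 1 i) * word_prod D A b (shift a (shift 1 i)))"
    using Suc.IH[OF Suc.prems(1) c(2)] by simp
  also have "shift a (shift 1 i) = shift (Suc a) i" by (simp add: shift_shift)
  also have "A (i 0) * (word_prod D A a (shift 1 i) * word_prod D A b (shift (Suc a) i))
     = (A (i 0) * word_prod D A a (shift 1 i)) * word_prod D A b (shift (Suc a) i)"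
    using ca cb c(1) Suc.prems(1)
    by (simp add: tensor_def assoc_mult_mat[symmetric, of _ D D _ D _ D])
  finally show ?case by (simp add: word_prod_Suc)
qed

lemma configs_finite: "finite (configs d l)"
proof -
  have "configs d l \<subseteq> (\<lambda>f n. if n < l then f n else 0) ` (PiE {..<l} (\<lambda>_. {..<d}))"
  proof
    fix i assume i: "i \<in> configs d l"
    have "i = (\<lambda>n. if n < l then (restrict i {..<l}) n else 0)"
      using i by (auto simp: configs_def fun_eq_iff)
    moreover have "restrict i {..<l} \<in> PiE {..<l} (\<lambda>_. {..<d})" using i by (auto simp: configs_def)
    ultimately show "i \<in> (\<lambda>f n. if n < l then f n else 0) ` (PiE {..<l} (\<lambda>_. {..<d}))" by blast
  qed
  then show ?thesis by (rule finite_subset) (auto intro!: finite_PiE)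
qed

lemma configs_bij: "bij_betw (\<lambda>i. (trunc a i, shift a i)) (configs d (a + b)) (configs d a \<times> configs d b)"
  by (rule bij_betw_byWitness[where f' = "\<lambda>(x,y). join a x y"])
     (auto simp: configs_def trunc_def shift_def join_def fun_eq_iff)

lemma trunc_configs: "i \<in> configs d (a + b) \<Longrightarrow> trunc a i \<in> configs d a"
  by (auto simp: configs_def trunc_def)
lemma shift_configs: "i \<in> configs d (a + b) \<Longrightarrow> shift a i \<in> configs d b"
  by (auto simp: configs_def shift_def)

definition LC :: "nat \<Rightarrow> nat \<Rightarrow> (nat\<Rightarrow>complex mat) \<Rightarrow> ((nat\<Rightarrow>nat)\<Rightarrow>complex) \<Rightarrow> nat \<Rightarrow> complex mat" where
  "LC d D A c l = mat D D (\<lambda>(p,q). \<Sum>x\<in>configs d l. c x * word_prod D A l x $$ (p,q))"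

lemma LC_carrier[simp]: "LC d D A c l \<in> carrier_mat D D" by (simp add: LC_def)
lemma LC_dim[simp]: "dim_row (LC d D A c l) = D" "dim_col (LC d D A c l) = D" by (simp_all add: LC_def)

lemma LC_cong: "(\<And>x. x \<in> configs d l \<Longrightarrow> c x = c' x) \<Longrightarrow> LC d D A c l = LC d D A c' l"
  unfolding LC_def by (intro cong_mat refl) (auto intro!: sum.cong)

lemma mult_entry: "M \<in> carrier_mat D D \<Longrightarrow> N \<in> carrier_mat D D \<Longrightarrow> p < D \<Longrightarrow> q < D \<Longrightarrow>
  (M * N) $$ (p,q) = (\<Sum>t<D. M $$ (p,t) * N $$ (t,q))"
  by (auto simp: scalar_prod_def atLeast0LessThan intro!: sum.cong)

lemma LC_split:
  assumes T: "tensor d D A"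
  shows "LC d D A (\<lambda>i. f (trunc a i) * g (shift a i)) (a + b) = LC d D A f a * LC d D A g b"
proof (rule eq_matI)
  fix p q assume p: "p < dim_row (LC d D A f a * LC d D A g b)" and q: "q < dim_col (LC d D A f a * LC d D A g b)"
  then have p: "p < D" and q: "q < D" by auto
  define F where "F = (\<lambda>(x, y). f x * g y * (\<Sum>t<D. word_prod D A a x $$ (p,t) * word_prod D A b y $$ (t,q)))"
  have "LC d D A (\<lambda>i. f (trunc a i) * g (shift a i)) (a + b) $$ (p,q)
     = (\<Sum>i\<in>configs d (a+b). f (trunc a i) * g (shift a i) * word_prod D A (a+b) i $$ (p,q))"
    using p q by (simp add: LC_def)
  also have "\<dots> = (\<Sum>i\<in>configs d (a+b). F (trunc a i, shift a i))"
  proof (rule sum.cong[OF refl])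
    fix i assume i: "i \<in> configs d (a+b)"
    have "word_prod D A (a+b) i = word_prod D A a (trunc a i) * word_prod D A b (shift a i)"
      using word_prod_split[OF T i] word_prod_cong[of a i "trunc a i"] by (simp add: trunc_def)
    then show "f (trunc a i) * g (shift a i) * word_prod D A (a+b) i $$ (p,q) = F (trunc a i, shift a i)"
      using p q word_prod_carrier[OF T trunc_configs[OF i]] word_prod_carrier[OF T shift_configs[OF i]]
      by (simp add: F_def mult_entry del: index_mult_mat)
  qed
  also have "\<dots> = (\<Sum>xy\<in>configs d a \<times> configs d b. F xy)"
    using sum.reindex_bij_betw[OF configs_bij, of F] by simp
  also have "\<dots> = (\<Sum>x\<in>configs d a. \<Sum>y\<in>configs d b. F (x,y))"
    by (simp add: sum.cartesian_product)
  also have "\<dots> = (\<Sum>t<D. (\<Sum>x\<in>configs d a. f x * word_prod D A a x $$ (p,t)) * (\<Sum>y\<in>configs d b. g y * word_prod D A b y $$ (t,q)))"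
    unfolding F_def apply (simp add: sum_product sum_distrib_left sum_distrib_right ac_simps sum.swap[of _ "{..<D}"])
    by (rule sum.cong[OF refl], rule sum.swap)
  also have "\<dots> = (LC d D A f a * LC d D A g b) $$ (p,q)"
    using p q by (subst mult_entry) (auto simp: LC_def)
  finally show "LC d D A (\<lambda>i. f (trunc a i) * g (shift a i)) (a + b) $$ (p,q) = (LC d D A f a * LC d D A g b) $$ (p,q)" .
qed auto

fun prodm :: "nat \<Rightarrow> nat \<Rightarrow> (nat \<Rightarrow> complex mat) \<Rightarrow> complex mat" where
  "prodm D 0 F = 1\<^sub>m D"
| "prodm D (Suc n) F = F 0 * prodm D n (\<lambda>j. F (Suc j))"

fun tot :: "nat \<Rightarrow> nat \<Rightarrow> (nat \<Rightarrow> nat) \<Rightarrow> nat" where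
  "tot L 0 lv = 0"
| "tot L (Suc n) lv = L + lv 0 + tot L n (\<lambda>j. lv (Suc j))"

fun wS :: "nat \<Rightarrow> nat \<Rightarrow> (nat \<Rightarrow> (nat\<Rightarrow>nat) \<Rightarrow> complex) \<Rightarrow> (nat \<Rightarrow> nat) \<Rightarrow> (nat\<Rightarrow>nat) \<Rightarrow> complex" where
  "wS L 0 \<sigma> lv x = 1"
| "wS L (Suc n) \<sigma> lv x = \<sigma> 0 (trunc L x) * wS L n (\<lambda>j. \<sigma> (Suc j)) (\<lambda>j. lv (Suc j)) (shift (L + lv 0) x)"

fun wC :: "nat \<Rightarrow> nat \<Rightarrow> (nat \<Rightarrow> (nat\<Rightarrow>nat) \<Rightarrow> complex) \<Rightarrow> (nat \<Rightarrow> nat) \<Rightarrow> (nat\<Rightarrow>nat) \<Rightarrow> complex" where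
  "wC L 0 \<gamma> lv y = 1"
| "wC L (Suc n) \<gamma> lv y = \<gamma> 0 (trunc (lv 0) (shift L y)) * wC L n (\<lambda>j. \<gamma> (Suc j)) (\<lambda>j. lv (Suc j)) (shift (L + lv 0) y)"

fun Sset :: "nat \<Rightarrow> nat \<Rightarrow> (nat \<Rightarrow> nat) \<Rightarrow> nat set" where
  "Sset L 0 lv = {}"
| "Sset L (Suc n) lv = {..<L} \<union> (\<lambda>m. m + (L + lv 0)) ` Sset L n (\<lambda>j. lv (Suc j))"

definition rS :: "nat set \<Rightarrow> (nat \<Rightarrow> nat) \<Rightarrow> (nat \<Rightarrow> nat)" where
  "rS S i = (\<lambda>m. if m \<in> S then i m else 0)"
definition rC :: "nat set \<Rightarrow> (nat \<Rightarrow> nat) \<Rightarrow> (nat \<Rightarrow> nat)" where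
  "rC S i = (\<lambda>m. if m \<in> S then 0 else i m)"

lemma prodm_carrier: "(\<And>j. j < n \<Longrightarrow> F j \<in> carrier_mat D D) \<Longrightarrow> prodm D n F \<in> carrier_mat D D"
proof (induction n arbitrary: F)
  case 0 then show ?case by simp
next
  case (Suc n)
  have "prodm D n (\<lambda>j. F (Suc j)) \<in> carrier_mat D D" using Suc by simp
  moreover have "F 0 \<in> carrier_mat D D" using Suc by simp
  ultimately show ?case by simp
qed

lemma LC_chain:
  assumes T: "tensor d D A"
  shows "LC d D A (\<lambda>i. wS L n \<sigma> lv i * wC L n \<gamma> lv i) (tot L n lv)
       = prodm D n (\<lambda>j. LC d D A (\<sigma> j) L * LC d D A (\<gamma> j) (lv j))"
proof (induction n arbitrary: \<sigma> \<gamma> lv)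
  case 0
  have c0: "configs d 0 = {\<lambda>_. 0}" by (auto simp: configs_def)
  show ?case by (auto simp: LC_def c0 word_prod_0 intro!: eq_matI)
next
  case (Suc n)
  define a where "a = L + lv 0"
  define f where "f = (\<lambda>x. \<sigma> 0 (trunc L x) * \<gamma> 0 (trunc (lv 0) (shift L x)))"
  define g where "g = (\<lambda>y. wS L n (\<lambda>j. \<sigma> (Suc j)) (\<lambda>j. lv (Suc j)) y * wC L n (\<lambda>j. \<gamma> (Suc j)) (\<lambda>j. lv (Suc j)) y)"
  have w: "(\<lambda>i. wS L (Suc n) \<sigma> lv i * wC L (Suc n) \<gamma> lv i) = (\<lambda>i. f (trunc a i) * g (shift a i))"
  proof
    fix i
    have "trunc L (trunc a i) = trunc L i" "trunc (lv 0) (shift L (trunc a i)) = trunc (lv 0) (shift L i)"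
      by (auto simp: trunc_def shift_def a_def fun_eq_iff)
    then show "wS L (Suc n) \<sigma> lv i * wC L (Suc n) \<gamma> lv i = f (trunc a i) * g (shift a i)"
      by (simp add: f_def g_def a_def ac_simps)
  qed
  have "LC d D A f a = LC d D A (\<lambda>x. \<sigma> 0 (trunc L x) * \<gamma> 0 (shift L x)) (L + lv 0)"
    unfolding a_def f_def
  proof (rule LC_cong)
    fix x assume "x \<in> configs d (L + lv 0)"
    then have "trunc (lv 0) (shift L x) = shift L x"
      by (auto simp: configs_def trunc_def shift_def fun_eq_iff)
    then show "\<sigma> 0 (trunc L x) * \<gamma> 0 (trunc (lv 0) (shift L x)) = \<sigma> 0 (trunc L x) * \<gamma> 0 (shift L x)"
      by simp
  qed
  also have "\<dots> = LC d D A (\<sigma> 0) L * LC d D A (\<gamma> 0) (lv 0)"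
    by (rule LC_split[OF T])
  finally have f: "LC d D A f a = LC d D A (\<sigma> 0) L * LC d D A (\<gamma> 0) (lv 0)" .
  have "LC d D A (\<lambda>i. wS L (Suc n) \<sigma> lv i * wC L (Suc n) \<gamma> lv i) (tot L (Suc n) lv)
      = LC d D A (\<lambda>i. f (trunc a i) * g (shift a i)) (a + tot L n (\<lambda>j. lv (Suc j)))"
  proof -
    have "tot L (Suc n) lv = a + tot L n (\<lambda>j. lv (Suc j))" by (simp add: a_def)
    then show ?thesis by (simp only: w)
  qed
  also have "\<dots> = LC d D A f a * LC d D A g (tot L n (\<lambda>j. lv (Suc j)))"
    by (rule LC_split[OF T])
  also have "\<dots> = prodm D (Suc n) (\<lambda>j. LC d D A (\<sigma> j) L * LC d D A (\<gamma> j) (lv j))"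
    using Suc.IH unfolding f g_def by simp
  finally show ?case .
qed

lemma wS_rS: "wS L n \<sigma> lv (rS (Sset L n lv) i) = wS L n \<sigma> lv i"
proof (induction n arbitrary: \<sigma> lv i)
  case 0 then show ?case by simp
next
  case (Suc n)
  have "trunc L (rS (Sset L (Suc n) lv) i) = trunc L i"
    by (auto simp: trunc_def rS_def fun_eq_iff)
  moreover have "shift (L + lv 0) (rS (Sset L (Suc n) lv) i) = rS (Sset L n (\<lambda>j. lv (Suc j))) (shift (L + lv 0) i)"
    by (auto simp: shift_def rS_def fun_eq_iff)
  ultimately show ?case using Suc.IH by simp
qed

lemma wC_rC: "wC L n \<gamma> lv (rC (Sset L n lv) i) = wC L n \<gamma> lv i"
proof (induction n arbitrary: \<gamma> lv i)
  case 0 then show ?case by simp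
next
  case (Suc n)
  have "trunc (lv 0) (shift L (rC (Sset L (Suc n) lv) i)) = trunc (lv 0) (shift L i)"
    by (auto simp: trunc_def rC_def shift_def fun_eq_iff)
  moreover have "shift (L + lv 0) (rC (Sset L (Suc n) lv) i) = rC (Sset L n (\<lambda>j. lv (Suc j))) (shift (L + lv 0) i)"
    by (auto simp: shift_def rC_def fun_eq_iff)
  ultimately show ?case using Suc.IH by simp
qed

lemma Sset_sub: "Sset L n lv \<subseteq> {0..<tot L n lv}"
  by (induction n arbitrary: lv) fastforce+

lemma mtrace_LC:
  assumes T: "tensor d D A"
  shows "mtrace (LC d D A c l) = (\<Sum>x\<in>configs d l. c x * ti_mps D A l x)"
proof -
  have "mtrace (LC d D A c l) = (\<Sum>k<D. \<Sum>x\<in>configs d l. c x * word_prod D A l x $$ (k,k))"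
    by (simp add: mtrace_def LC_def)
  also have "\<dots> = (\<Sum>x\<in>configs d l. c x * ti_mps D A l x)"
  proof -
    have "\<And>x. x \<in> configs d l \<Longrightarrow> dim_row (word_prod D A l x) = D"
      using word_prod_carrier[OF T] by blast
    then show ?thesis
      by (subst sum.swap) (auto simp: ti_mps_def mtrace_def sum_distrib_left intro!: sum.cong)
  qed
  finally show ?thesis .
qed

declare index_mult_mat(1)[simp del]

definition Em :: "nat \<Rightarrow> nat \<Rightarrow> nat \<Rightarrow> complex mat" where
  "Em D p q = mat D D (\<lambda>(i,j). if i = p \<and> j = q then 1 else 0)"

lemma Em_carrier[simp]: "Em D p q \<in> carrier_mat D D" by (simp add: Em_def)
lemma Em_dim[simp]: "dim_row (Em D p q) = D" "dim_col (Em D p q) = D" by (simp_all add: Em_def)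

lemma smult_one_mat: "M \<in> carrier_mat n m \<Longrightarrow> (1::complex) \<cdot>\<^sub>m M = M"
  by (auto intro!: eq_matI)

lemma EB_entry: assumes "B \<in> carrier_mat D D" "r < D" "i < D" "k < D"
  shows "(Em D p r * B) $$ (i,k) = (if i = p then B $$ (r,k) else 0)"
proof -
  have "(Em D p r * B) $$ (i,k) = (\<Sum>t<D. Em D p r $$ (i,t) * B $$ (t,k))"
    using assms by (intro mult_entry) auto
  also have "\<dots> = (\<Sum>t<D. if t = r then (if i = p then B $$ (r,k) else 0) else 0)"
    using assms by (intro sum.cong) (auto simp: Em_def)
  also have "\<dots> = (if i = p then B $$ (r,k) else 0)" using assms by simp
  finally show ?thesis .
qed

lemma EB_E: assumes B: "B \<in> carrier_mat D D" and r: "r < D" and p': "p' < D"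
  shows "(Em D p r * B) * Em D p' r' = B $$ (r,p') \<cdot>\<^sub>m Em D p r'"
proof (rule eq_matI)
  fix i j assume "i < dim_row (B $$ (r,p') \<cdot>\<^sub>m Em D p r')" "j < dim_col (B $$ (r,p') \<cdot>\<^sub>m Em D p r')"
  then have i: "i < D" and j: "j < D" by (auto simp: Em_def)
  have "((Em D p r * B) * Em D p' r') $$ (i,j) = (\<Sum>k<D. (Em D p r * B) $$ (i,k) * Em D p' r' $$ (k,j))"
    using B i j by (intro mult_entry) (auto intro!: mult_carrier_mat)
  also have "\<dots> = (\<Sum>k<D. (if i = p then B $$ (r,k) else 0) * (if k = p' \<and> j = r' then 1 else 0))"
    using B r i j by (intro sum.cong refl) (simp add: EB_entry[OF B r i], simp add: Em_def)
  also have "\<dots> = (B $$ (r,p') \<cdot>\<^sub>m Em D p r') $$ (i,j)"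
    using i j p' by (auto simp: Em_def if_distrib cong: if_cong)
  finally show "((Em D p r * B) * Em D p' r') $$ (i,j) = (B $$ (r,p') \<cdot>\<^sub>m Em D p r') $$ (i,j)" .
qed (auto simp: Em_def)

lemma chain_prod:
  assumes "\<And>j. j \<le> m \<Longrightarrow> P j < D" "\<And>j. j \<le> m \<Longrightarrow> R j < D" "\<And>j. j \<le> m \<Longrightarrow> B j \<in> carrier_mat D D"
  shows "prodm D (Suc m) (\<lambda>j. Em D (P j) (R j) * B j)
       = (\<Prod>j<m. B j $$ (R j, P (Suc j))) \<cdot>\<^sub>m (Em D (P 0) (R m) * B m)"
  using assms
proof (induction m arbitrary: P R B)
  case 0
  have "B 0 \<in> carrier_mat D D" using 0 by auto
  then have "Em D (P 0) (R 0) * B 0 \<in> carrier_mat D D" by (intro mult_carrier_mat) auto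
  then show ?case by (simp add: smult_one_mat[of _ D D] right_mult_one_mat[of _ D D])
next
  case (Suc m)
  define c where "c = (\<Prod>j<m. B (Suc j) $$ (R (Suc j), P (Suc (Suc j))))"
  have B0: "B 0 \<in> carrier_mat D D" and B1: "B (Suc m) \<in> carrier_mat D D" using Suc.prems by auto
  have r0: "R 0 < D" and p1: "P 1 < D" using Suc.prems by auto
  have "prodm D (Suc (Suc m)) (\<lambda>j. Em D (P j) (R j) * B j)
      = (Em D (P 0) (R 0) * B 0) * (c \<cdot>\<^sub>m (Em D (P 1) (R (Suc m)) * B (Suc m)))"
    using Suc.IH[of "\<lambda>j. P (Suc j)" "\<lambda>j. R (Suc j)" "\<lambda>j. B (Suc j)"] Suc.prems by (simp add: c_def)
  also have "\<dots> = c \<cdot>\<^sub>m (((Em D (P 0) (R 0) * B 0) * Em D (P 1) (R (Suc m))) * B (Suc m))"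
  proof -
    have X: "Em D (P 0) (R 0) * B 0 \<in> carrier_mat D D" using B0 by (intro mult_carrier_mat) auto
    have Y: "Em D (P 1) (R (Suc m)) * B (Suc m) \<in> carrier_mat D D" using B1 by (intro mult_carrier_mat) auto
    have "(Em D (P 0) (R 0) * B 0) * (c \<cdot>\<^sub>m (Em D (P 1) (R (Suc m)) * B (Suc m)))
        = c \<cdot>\<^sub>m ((Em D (P 0) (R 0) * B 0) * (Em D (P 1) (R (Suc m)) * B (Suc m)))"
      by (rule mult_smult_distrib[OF X Y])
    also have "(Em D (P 0) (R 0) * B 0) * (Em D (P 1) (R (Suc m)) * B (Suc m))
        = ((Em D (P 0) (R 0) * B 0) * Em D (P 1) (R (Suc m))) * B (Suc m)"
      by (rule assoc_mult_mat[OF X Em_carrier B1, symmetric])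
    finally show ?thesis .
  qed
  also have "\<dots> = c \<cdot>\<^sub>m ((B 0 $$ (R 0, P 1) \<cdot>\<^sub>m Em D (P 0) (R (Suc m))) * B (Suc m))"
    using EB_E[OF B0 r0 p1] by simp
  also have "\<dots> = (B 0 $$ (R 0, P 1) * c) \<cdot>\<^sub>m (Em D (P 0) (R (Suc m)) * B (Suc m))"
    using B1 by (simp add: mult_smult_assoc_mat[OF Em_carrier B1], intro eq_matI, auto)
  also have "B 0 $$ (R 0, P 1) * c = (\<Prod>j<Suc m. B j $$ (R j, P (Suc j)))"
    unfolding c_def by (simp only: prod.lessThan_Suc_shift One_nat_def)
  finally show ?case .
qed

lemma mtrace_chain: assumes B: "B \<in> carrier_mat D D" and p: "p < D" and r: "r < D"
  shows "mtrace (c \<cdot>\<^sub>m (Em D p r * B)) = c * B $$ (r,p)"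
proof -
  have "mtrace (c \<cdot>\<^sub>m (Em D p r * B)) = (\<Sum>k<D. c * (if k = p then B $$ (r,k) else 0))"
    using B r by (auto simp: mtrace_def EB_entry intro!: sum.cong)
  also have "\<dots> = c * B $$ (r,p)" using p by (simp add: if_distrib cong: if_cong)
  finally show ?thesis .
qed

definition fscale :: "complex \<Rightarrow> ('a \<Rightarrow> complex) \<Rightarrow> ('a \<Rightarrow> complex)" where
  "fscale c f = (\<lambda>x. c * f x)"

lemma vs_f: "vector_space (fscale :: complex \<Rightarrow> ('a \<Rightarrow> complex) \<Rightarrow> ('a \<Rightarrow> complex))"
  by unfold_locales (auto simp: fscale_def fun_eq_iff algebra_simps)

lemma vs_c: "vector_space ((*) :: complex \<Rightarrow> complex \<Rightarrow> complex)"
  by unfold_locales (auto simp: algebra_simps)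

lemma fsum_apply: "(\<Sum>b\<in>I. f b) x = (\<Sum>b\<in>I. (f b) x :: complex)"
  by (induction I rule: infinite_finite_induct) auto

lemma card_le_from_dual:
  fixes P :: "'i \<Rightarrow> nat \<Rightarrow> complex" and Q :: "nat \<Rightarrow> 'i \<Rightarrow> complex"
  assumes I: "finite I" and dual: "\<And>a b. a \<in> I \<Longrightarrow> b \<in> I \<Longrightarrow> (\<Sum>k<D. P a k * Q k b) = (if a = b then 1 else 0)"
  shows "card I \<le> D"
proof -
  interpret V: vector_space "fscale :: complex \<Rightarrow> (nat \<Rightarrow> complex) \<Rightarrow> (nat \<Rightarrow> complex)" by (rule vs_f)
  define p where "p = (\<lambda>a k. if k < D then P a k else 0)"
  define \<delta> where "\<delta> = (\<lambda>k::nat. \<lambda>k'::nat. if k' = k then (1::complex) else 0)"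
  have pd: "(\<Sum>k<D. p a k * Q k b) = (if a = b then 1 else 0)" if "a \<in> I" "b \<in> I" for a b
    using dual[OF that] by (simp add: p_def)
  have inj: "inj_on p I"
  proof (rule inj_onI)
    fix a b assume a: "a \<in> I" and b: "b \<in> I" and e: "p a = p b"
    have "(\<Sum>k<D. p a k * Q k a) = 1" using pd[OF a a] by simp
    then have "(\<Sum>k<D. p b k * Q k a) = 1" using e by simp
    then show "a = b" using pd[OF b a] by (auto split: if_splits)
  qed
  have sp: "p ` I \<subseteq> V.span (\<delta> ` {..<D})"
  proof
    fix v assume "v \<in> p ` I"
    then obtain a where v: "v = p a" by auto
    have "p a = (\<Sum>k<D. fscale (P a k) (\<delta> k))"
      by (auto simp: fun_eq_iff fsum_apply fscale_def \<delta>_def p_def if_distrib cong: if_cong)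
    also have "\<dots> \<in> V.span (\<delta> ` {..<D})"
      by (intro V.span_sum V.span_scale V.span_base) auto
    finally show "v \<in> V.span (\<delta> ` {..<D})" using v by simp
  qed
  have ind: "V.independent (p ` I)"
  proof (rule V.independent_if_scalars_zero)
    show "finite (p ` I)" using I by simp
  next
    fix f x assume z: "(\<Sum>v\<in>p ` I. fscale (f v) v) = 0" and x: "x \<in> p ` I"
    then obtain a where a: "a \<in> I" and xa: "x = p a" by auto
    have z2: "(\<Sum>b\<in>I. fscale (f (p b)) (p b)) = 0" using z sum.reindex[OF inj, of "\<lambda>v. fscale (f v) v"] by simp
    have "0 = (\<Sum>k<D. (\<Sum>b\<in>I. fscale (f (p b)) (p b)) k * Q k a)" by (simp add: z2)
    also have "\<dots> = (\<Sum>b\<in>I. f (p b) * (\<Sum>k<D. p b k * Q k a))"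
      by (simp add: fsum_apply fscale_def sum_distrib_left sum_distrib_right sum.swap[of _ "{..<D}"] ac_simps)
    also have "\<dots> = (\<Sum>b\<in>I. if b = a then f (p a) else 0)"
      using pd a by (intro sum.cong) auto
    also have "\<dots> = f (p a)" using I a by simp
    finally show "f x = 0" using xa by simp
  qed
  have "finite (p ` I) \<and> card (p ` I) \<le> card (\<delta> ` {..<D})"
    by (rule V.independent_span_bound[OF _ ind sp]) simp
  then have "card I \<le> card (\<delta> ` {..<D})" using card_image[OF inj] by simp
  also have "\<dots> \<le> D" using card_image_le[of "{..<D}" \<delta>] by simp
  finally show ?thesis .
qed

lemma dual_exists:
  fixes \<phi> :: "'e \<Rightarrow> ((nat\<Rightarrow>nat) \<Rightarrow> complex)" and C :: "(nat\<Rightarrow>nat) set"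
  assumes C: "finite C" and inj: "inj_on \<phi> E"
    and ind: "\<not> module.dependent (fscale :: complex \<Rightarrow> ((nat\<Rightarrow>nat) \<Rightarrow> complex) \<Rightarrow> _) (\<phi> ` E)"
    and supp: "\<And>e x. e \<in> E \<Longrightarrow> x \<notin> C \<Longrightarrow> \<phi> e x = 0" and t: "t \<in> E"
  shows "\<exists>\<gamma>. \<forall>e\<in>E. (\<Sum>x\<in>C. \<gamma> x * \<phi> e x) = (if e = t then 1 else 0)"
proof -
  interpret V: vector_space_pair "fscale :: complex \<Rightarrow> ((nat\<Rightarrow>nat) \<Rightarrow> complex) \<Rightarrow> _" "(*) :: complex \<Rightarrow> complex \<Rightarrow> complex"
    by (intro vector_space_pair.intro vs_f vs_c)
  obtain g where lin: "Vector_Spaces.linear fscale (*) g" and gv: "\<forall>v\<in>\<phi> ` E. g v = (if v = \<phi> t then 1 else 0)"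
    using V.linear_independent_extend[OF ind, of "\<lambda>v. if v = \<phi> t then 1 else 0"] by blast
  have mh: "module_hom fscale (*) g" using lin by (simp add: module_hom_iff_linear)
  define \<delta> where "\<delta> = (\<lambda>x::nat\<Rightarrow>nat. \<lambda>y. if y = x then (1::complex) else 0)"
  show ?thesis
  proof (intro exI[of _ "\<lambda>x. g (\<delta> x)"] ballI)
    fix e assume e: "e \<in> E"
    have "\<phi> e = (\<Sum>x\<in>C. fscale (\<phi> e x) (\<delta> x))"
    proof
      fix y
      have "(\<Sum>x\<in>C. fscale (\<phi> e x) (\<delta> x)) y = (\<Sum>x\<in>C. if x = y then \<phi> e y else 0)"
        by (simp add: fsum_apply fscale_def \<delta>_def) (intro sum.cong, auto)
      also have "\<dots> = \<phi> e y" using supp[OF e, of y] C by (simp add: sum.delta)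
      finally show "\<phi> e y = (\<Sum>x\<in>C. fscale (\<phi> e x) (\<delta> x)) y" by simp
    qed
    then have "g (\<phi> e) = g (\<Sum>x\<in>C. fscale (\<phi> e x) (\<delta> x))" by (rule arg_cong)
    also have "\<dots> = (\<Sum>x\<in>C. g (fscale (\<phi> e x) (\<delta> x)))" by (rule module_hom.sum[OF mh])
    also have "\<dots> = (\<Sum>x\<in>C. \<phi> e x * g (\<delta> x))" by (simp add: module_hom.scale[OF mh])
    finally have "g (\<phi> e) = (\<Sum>x\<in>C. \<phi> e x * g (\<delta> x))" .
    moreover have "g (\<phi> e) = (if e = t then 1 else 0)"
      using gv e t inj by (auto dest: inj_onD)
    ultimately show "(\<Sum>x\<in>C. g (\<delta> x) * \<phi> e x) = (if e = t then 1 else 0)" by (simp add: ac_simps)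
  qed
qed

lemma trace_mult: assumes X: "X \<in> carrier_mat D D" and M: "M \<in> carrier_mat D D"
  shows "mtrace (X * M) = (\<Sum>i<D. \<Sum>j<D. X $$ (i,j) * M $$ (j,i))"
proof -
  have "dim_row (X * M) = D" using X by simp
  then have "mtrace (X * M) = (\<Sum>i<D. (X * M) $$ (i,i))" by (simp add: mtrace_def)
  also have "\<dots> = (\<Sum>i<D. \<Sum>j<D. X $$ (i,j) * M $$ (j,i))"
    by (rule sum.cong[OF refl], rule mult_entry[OF X M]) auto
  finally show ?thesis .
qed

lemma inj_zero:
  assumes T: "tensor d D A" and inj: "injective_block d D A l"
    and z: "\<And>x. x \<in> configs d l \<Longrightarrow> (\<Sum>e\<in>{..<D} \<times> {..<D}. lam e * word_prod D A l x $$ e) = 0"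
    and e: "e \<in> {..<D} \<times> {..<D}"
  shows "lam e = 0"
proof -
  define X where "X = mat D D (\<lambda>(i,j). lam (j,i))"
  have X: "X \<in> carrier_mat D D" by (simp add: X_def)
  have "(\<lambda>w\<in>configs d l. mtrace (X * word_prod D A l w)) = (\<lambda>w\<in>configs d l. mtrace (0\<^sub>m D D * word_prod D A l w))"
  proof (rule restrict_ext)
    fix w assume w: "w \<in> configs d l"
    have Wc: "word_prod D A l w \<in> carrier_mat D D" by (rule word_prod_carrier[OF T w])
    have "mtrace (X * word_prod D A l w) = (\<Sum>i<D. \<Sum>j<D. lam (j,i) * word_prod D A l w $$ (j,i))"
      using trace_mult[OF X Wc] by (simp add: X_def)
    also have "\<dots> = (\<Sum>e\<in>{..<D} \<times> {..<D}. lam e * word_prod D A l w $$ e)"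
      by (subst sum.swap, subst sum.cartesian_product, rule sum.cong) auto
    also have "\<dots> = 0" by (rule z[OF w])
    also have "0 = mtrace (0\<^sub>m D D * word_prod D A l w)"
      using trace_mult[OF zero_carrier_mat Wc] by simp
    finally show "mtrace (X * word_prod D A l w) = mtrace (0\<^sub>m D D * word_prod D A l w)" .
  qed
  then have "X = 0\<^sub>m D D" by (rule inj_onD[OF inj[unfolded injective_block_def] _ X zero_carrier_mat])
  moreover obtain i j where ij: "e = (i,j)" "i < D" "j < D" using e by auto
  moreover have "X $$ (j, i) = lam (i,j)" using ij by (simp add: X_def)
  ultimately show ?thesis by simp
qed

definition entryf :: "nat \<Rightarrow> nat \<Rightarrow> (nat \<Rightarrow> complex mat) \<Rightarrow> nat \<Rightarrow> nat \<times> nat \<Rightarrow> (nat \<Rightarrow> nat) \<Rightarrow> complex" where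
  "entryf d D A l e = (\<lambda>x. if x \<in> configs d l then word_prod D A l x $$ e else 0)"

lemma dual_family:
  assumes T: "tensor d D A" and E: "E \<subseteq> {..<D} \<times> {..<D}" "finite E"
    and inj: "inj_on (entryf d D A l) E"
    and ind: "\<not> module.dependent (fscale :: complex \<Rightarrow> ((nat\<Rightarrow>nat) \<Rightarrow> complex) \<Rightarrow> _) (entryf d D A l ` E)"
    and t: "t \<in> E"
  shows "\<exists>\<gamma>. \<forall>e\<in>E. LC d D A \<gamma> l $$ e = (if e = t then 1 else 0)"
proof -
  obtain \<gamma> where g: "\<forall>e\<in>E. (\<Sum>x\<in>configs d l. \<gamma> x * entryf d D A l e x) = (if e = t then 1 else 0)"
  proof -
    have "\<exists>\<gamma>. \<forall>e\<in>E. (\<Sum>x\<in>configs d l. \<gamma> x * entryf d D A l e x) = (if e = t then 1 else 0)"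
      by (rule dual_exists[OF configs_finite inj ind _ t]) (simp add: entryf_def)
    then show ?thesis using that by blast
  qed
  show ?thesis
  proof (intro exI ballI)
    fix e assume e: "e \<in> E"
    then have "fst e < D" "snd e < D" using E by auto
    then have "LC d D A \<gamma> l $$ e = (\<Sum>x\<in>configs d l. \<gamma> x * entryf d D A l e x)"
      by (cases e) (simp add: LC_def entryf_def)
    then show "LC d D A \<gamma> l $$ e = (if e = t then 1 else 0)" using g e by simp
  qed
qed

lemma full_span:
  assumes T: "tensor d D A" and inj: "injective_block d D A l" and p: "p < D" and q: "q < D"
  shows "\<exists>c. LC d D A c l = Em D p q"
proof -
  let ?B = "{..<D} \<times> {..<D}"
  let ?\<phi> = "entryf d D A l"
  interpret V: vector_space "fscale :: complex \<Rightarrow> ((nat\<Rightarrow>nat) \<Rightarrow> complex) \<Rightarrow> _" by (rule vs_f)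
  have injf: "inj_on ?\<phi> ?B"
  proof (rule inj_onI, rule ccontr)
    fix e1 e2 assume e1: "e1 \<in> ?B" and e2: "e2 \<in> ?B" and eq: "?\<phi> e1 = ?\<phi> e2" and ne: "e1 \<noteq> e2"
    define lam where "lam = (\<lambda>e. if e = e1 then (1::complex) else if e = e2 then -1 else 0)"
    have "lam e1 = 0"
    proof (rule inj_zero[OF T inj _ e1])
      fix x assume x: "x \<in> configs d l"
      have "word_prod D A l x $$ e1 = word_prod D A l x $$ e2"
        using fun_cong[OF eq, of x] x by (simp add: entryf_def)
      moreover have "(\<Sum>e\<in>?B. lam e * word_prod D A l x $$ e)
          = (\<Sum>e\<in>?B. (if e = e1 then word_prod D A l x $$ e1 else 0) - (if e = e2 then word_prod D A l x $$ e2 else 0))"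
        using ne by (intro sum.cong) (auto simp: lam_def)
      ultimately show "(\<Sum>e\<in>?B. lam e * word_prod D A l x $$ e) = 0"
        using e1 e2 by (simp add: sum_subtractf)
    qed
    then show False by (simp add: lam_def)
  qed
  have ind: "V.independent (?\<phi> ` ?B)"
  proof (rule V.independent_if_scalars_zero)
    show "finite (?\<phi> ` ?B)" by simp
  next
    fix f v assume z: "(\<Sum>v\<in>?\<phi> ` ?B. fscale (f v) v) = 0" and v: "v \<in> ?\<phi> ` ?B"
    then obtain e where e: "e \<in> ?B" and ve: "v = ?\<phi> e" by auto
    have z2: "(\<Sum>e\<in>?B. fscale (f (?\<phi> e)) (?\<phi> e)) = 0"
      using z sum.reindex[OF injf, of "\<lambda>v. fscale (f v) v"] by simp
    have "(\<lambda>e. f (?\<phi> e)) e = 0"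
    proof (rule inj_zero[OF T inj _ e])
      fix x assume x: "x \<in> configs d l"
      have "0 = (\<Sum>e\<in>?B. fscale (f (?\<phi> e)) (?\<phi> e)) x" by (simp add: z2)
      also have "\<dots> = (\<Sum>e\<in>?B. f (?\<phi> e) * word_prod D A l x $$ e)"
        using x by (simp add: fsum_apply fscale_def entryf_def)
      finally show "(\<Sum>e\<in>?B. f (?\<phi> e) * word_prod D A l x $$ e) = 0" by simp
    qed
    then show "f v = 0" using ve by simp
  qed
  obtain \<gamma> where g: "\<forall>e\<in>?B. LC d D A \<gamma> l $$ e = (if e = (p,q) then 1 else 0)"
    using dual_family[OF T _ _ injf ind, of "(p,q)"] p q by auto
  show ?thesis
  proof (intro exI eq_matI)
    fix i j assume "i < dim_row (Em D p q)" "j < dim_col (Em D p q)"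
    then have "(i,j) \<in> ?B" by auto
    then show "LC d D A \<gamma> l $$ (i,j) = Em D p q $$ (i,j)" using g by (auto simp: Em_def)
  qed auto
qed

lemma smult_mult_mat: assumes X: "X \<in> carrier_mat D D" and Y: "Y \<in> carrier_mat D D"
  shows "(a \<cdot>\<^sub>m X) * (b \<cdot>\<^sub>m Y) = (a * b :: complex) \<cdot>\<^sub>m (X * Y)"
proof -
  have bY: "b \<cdot>\<^sub>m Y \<in> carrier_mat D D" using Y by simp
  have "(a \<cdot>\<^sub>m X) * (b \<cdot>\<^sub>m Y) = a \<cdot>\<^sub>m (X * (b \<cdot>\<^sub>m Y))" by (rule mult_smult_assoc_mat[OF X bY])
  also have "X * (b \<cdot>\<^sub>m Y) = b \<cdot>\<^sub>m (X * Y)" by (rule mult_smult_distrib[OF X Y])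
  also have "a \<cdot>\<^sub>m (b \<cdot>\<^sub>m (X * Y)) = (a * b) \<cdot>\<^sub>m (X * Y)" using X Y by (intro eq_matI) auto
  finally show ?thesis .
qed

lemma pow_multiple:
  assumes T: "tensor d D A" and La: "La \<in> carrier_mat D D"
    and hyp: "\<And>y. y \<in> configs d r \<Longrightarrow> \<exists>c. word_prod D A r y = c \<cdot>\<^sub>m La"
  shows "w \<in> configs d (r * m) \<Longrightarrow> \<exists>c. word_prod D A (r * m) w = c \<cdot>\<^sub>m (La ^\<^sub>m m)"
proof (induction m arbitrary: w)
  case 0
  have "word_prod D A (r * 0) w = 1 \<cdot>\<^sub>m (La ^\<^sub>m 0)"
    using La by (simp add: word_prod_0 smult_one_mat[of _ D D])
  then show ?case by blast
next
  case (Suc m)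
  have w: "w \<in> configs d (r * m + r)" using Suc.prems by (simp add: ac_simps)
  have "word_prod D A (r * m + r) w = word_prod D A (r * m) w * word_prod D A r (shift (r * m) w)"
    by (rule word_prod_split[OF T w])
  also have "word_prod D A (r * m) w = word_prod D A (r * m) (trunc (r * m) w)"
    by (rule word_prod_cong) (simp add: trunc_def)
  finally have e: "word_prod D A (r * m + r) w = word_prod D A (r * m) (trunc (r * m) w) * word_prod D A r (shift (r * m) w)" .
  obtain c1 where c1: "word_prod D A (r * m) (trunc (r * m) w) = c1 \<cdot>\<^sub>m (La ^\<^sub>m m)"
    using Suc.IH[OF trunc_configs[OF w]] by blast
  obtain c2 where c2: "word_prod D A r (shift (r * m) w) = c2 \<cdot>\<^sub>m La"
    using hyp[OF shift_configs[OF w]] by blast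
  have "word_prod D A (r * Suc m) w = (c1 * c2) \<cdot>\<^sub>m (La ^\<^sub>m m * La)"
    using e c1 c2 smult_mult_mat[OF pow_carrier_mat[OF La] La] by (simp add: ac_simps)
  then show ?case by auto
qed

lemma no_multiple:
  assumes T: "tensor d D A" and inj: "injective_block d D A m" and D2: "2 \<le> D"
    and M: "M \<in> carrier_mat D D" and hyp: "\<And>w. w \<in> configs d m \<Longrightarrow> \<exists>c. word_prod D A m w = c \<cdot>\<^sub>m M"
  shows False
proof -
  let ?\<Psi> = "\<lambda>X. (\<lambda>w\<in>configs d m. mtrace (X * word_prod D A m w))"
  have tr: "\<exists>c. \<forall>a p q. p < D \<longrightarrow> q < D \<longrightarrow> mtrace ((a \<cdot>\<^sub>m Em D p q) * word_prod D A m w) = a * c * M $$ (q,p)"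
    if w: "w \<in> configs d m" for w
  proof -
    obtain c where c: "word_prod D A m w = c \<cdot>\<^sub>m M" using hyp[OF w] by blast
    show ?thesis
    proof (intro exI[of _ c] allI impI)
      fix a p q assume p: "p < D" and q: "q < D"
      have "(a \<cdot>\<^sub>m Em D p q) * word_prod D A m w = (a * c) \<cdot>\<^sub>m (Em D p q * M)"
        unfolding c by (rule smult_mult_mat[OF Em_carrier M])
      then show "mtrace ((a \<cdot>\<^sub>m Em D p q) * word_prod D A m w) = a * c * M $$ (q,p)"
        using mtrace_chain[OF M p q] by simp
    qed
  qed
  have psi: "?\<Psi> (a \<cdot>\<^sub>m Em D p q) = ?\<Psi> (b \<cdot>\<^sub>m Em D p' q') \<Longrightarrow> a \<cdot>\<^sub>m Em D p q = b \<cdot>\<^sub>m Em D p' q'" for a b p q p' q'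
    by (rule inj_onD[OF inj[unfolded injective_block_def]]) auto
  have D01: "0 < D" "1 < D" using D2 by auto
  have "?\<Psi> (M $$ (1,0) \<cdot>\<^sub>m Em D 0 0) = ?\<Psi> (M $$ (0,0) \<cdot>\<^sub>m Em D 0 1)"
  proof (rule restrict_ext)
    fix w assume w: "w \<in> configs d m"
    obtain c where "\<forall>a p q. p < D \<longrightarrow> q < D \<longrightarrow> mtrace ((a \<cdot>\<^sub>m Em D p q) * word_prod D A m w) = a * c * M $$ (q,p)"
      using tr[OF w] by blast
    then show "mtrace ((M $$ (1,0) \<cdot>\<^sub>m Em D 0 0) * word_prod D A m w) = mtrace ((M $$ (0,0) \<cdot>\<^sub>m Em D 0 1) * word_prod D A m w)"
      using D01 by simp
  qed
  then have X: "M $$ (1,0) \<cdot>\<^sub>m Em D 0 0 = M $$ (0,0) \<cdot>\<^sub>m Em D 0 1" by (rule psi)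
  have "M $$ (1,0) = 0" using arg_cong[OF X, of "\<lambda>X. X $$ (0,0)"] D01 by (simp add: Em_def)
  have m00: "M $$ (0,0) = 0" using arg_cong[OF X, of "\<lambda>X. X $$ (0,1)"] D01 by (simp add: Em_def)
  have "?\<Psi> (1 \<cdot>\<^sub>m Em D 0 0) = ?\<Psi> (0 \<cdot>\<^sub>m Em D 0 0)"
  proof (rule restrict_ext)
    fix w assume w: "w \<in> configs d m"
    obtain c where "\<forall>a p q. p < D \<longrightarrow> q < D \<longrightarrow> mtrace ((a \<cdot>\<^sub>m Em D p q) * word_prod D A m w) = a * c * M $$ (q,p)"
      using tr[OF w] by blast
    then show "mtrace ((1 \<cdot>\<^sub>m Em D 0 0) * word_prod D A m w) = mtrace ((0 \<cdot>\<^sub>m Em D 0 0) * word_prod D A m w)"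
      using D01 m00 by simp
  qed
  then have "1 \<cdot>\<^sub>m Em D 0 0 = 0 \<cdot>\<^sub>m Em D 0 0" by (rule psi)
  from arg_cong[OF this, of "\<lambda>X. X $$ (0,0)"] show False using D01 by (simp add: Em_def)
qed

lemma short_family:
  assumes T: "tensor d D A" and D2: "2 \<le> D" and r: "1 \<le> r" and inj: "injective_block d D A (r * L)"
  shows "\<exists>E. E \<subseteq> {..<D} \<times> {..<D} \<and> card E = 2 \<and>
            (\<forall>t\<in>E. \<exists>\<gamma>. \<forall>e\<in>E. LC d D A \<gamma> r $$ e = (if e = t then 1 else 0))"
proof -
  let ?B = "{..<D} \<times> {..<D}"
  let ?\<phi> = "entryf d D A r"
  interpret V: vector_space "fscale :: complex \<Rightarrow> ((nat\<Rightarrow>nat) \<Rightarrow> complex) \<Rightarrow> _" by (rule vs_f)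
  show ?thesis
  proof (cases "\<exists>e0\<in>?B. \<exists>e1\<in>?B. ?\<phi> e0 \<noteq> ?\<phi> e1 \<and> V.independent {?\<phi> e0, ?\<phi> e1}")
    case True
    then obtain e0 e1 where e: "e0 \<in> ?B" "e1 \<in> ?B" "?\<phi> e0 \<noteq> ?\<phi> e1" "V.independent {?\<phi> e0, ?\<phi> e1}" by blast
    then have ne: "e0 \<noteq> e1" by auto
    have injE: "inj_on ?\<phi> {e0, e1}" using e(3) by (auto simp: inj_on_def)
    have "\<forall>t\<in>{e0,e1}. \<exists>\<gamma>. \<forall>e\<in>{e0,e1}. LC d D A \<gamma> r $$ e = (if e = t then 1 else 0)"
    proof
      fix t assume t: "t \<in> {e0, e1}"
      show "\<exists>\<gamma>. \<forall>e\<in>{e0,e1}. LC d D A \<gamma> r $$ e = (if e = t then 1 else 0)"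
        by (rule dual_family[OF T _ _ injE _ t]) (use e in auto)
    qed
    then show ?thesis using e ne by (intro exI[of _ "{e0,e1}"]) auto
  next
    case False
    have "\<exists>La \<in> carrier_mat D D. \<forall>y\<in>configs d r. \<exists>c. word_prod D A r y = c \<cdot>\<^sub>m La"
    proof (cases "\<forall>e\<in>?B. ?\<phi> e = 0")
      case True
      show ?thesis
      proof (intro bexI[of _ "0\<^sub>m D D"] ballI exI[of _ 0])
        fix y assume y: "y \<in> configs d r"
        have Wc: "word_prod D A r y \<in> carrier_mat D D" by (rule word_prod_carrier[OF T y])
        show "word_prod D A r y = 0 \<cdot>\<^sub>m 0\<^sub>m D D"
        proof (rule eq_matI)
          fix i j assume "i < dim_row (0 \<cdot>\<^sub>m 0\<^sub>m D D :: complex mat)" "j < dim_col (0 \<cdot>\<^sub>m 0\<^sub>m D D :: complex mat)"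
          then have "(i,j) \<in> ?B" by auto
          then have "?\<phi> (i,j) y = 0" using True by auto
          then show "word_prod D A r y $$ (i,j) = (0 \<cdot>\<^sub>m 0\<^sub>m D D) $$ (i,j)"
            using y \<open>(i,j) \<in> ?B\<close> by (simp add: entryf_def)
        qed (use Wc in auto)
      qed simp
    next
      case nz: False
      then obtain es where es: "es \<in> ?B" "?\<phi> es \<noteq> 0" by auto
      have mult: "\<exists>k. ?\<phi> e = fscale k (?\<phi> es)" if e: "e \<in> ?B" for e
      proof (cases "?\<phi> e = ?\<phi> es")
        case True then show ?thesis by (intro exI[of _ 1]) (simp add: fscale_def)
      next
        case ne: False
        then have "\<not> V.independent {?\<phi> e, ?\<phi> es}" using False e es(1) by blast
        moreover have "V.independent {?\<phi> es}" using es(2) by simp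
        ultimately have "?\<phi> e \<in> V.span {?\<phi> es}" using ne by (simp add: V.independent_insert)
        then show ?thesis by (auto simp: V.span_singleton)
      qed
      define La where "La = mat D D (\<lambda>e. SOME k. ?\<phi> e = fscale k (?\<phi> es))"
      show ?thesis
      proof (intro bexI[of _ La] ballI)
        fix y assume y: "y \<in> configs d r"
        have Wc: "word_prod D A r y \<in> carrier_mat D D" by (rule word_prod_carrier[OF T y])
        show "\<exists>c. word_prod D A r y = c \<cdot>\<^sub>m La"
        proof (intro exI[of _ "word_prod D A r y $$ es"] eq_matI)
          fix i j assume "i < dim_row (word_prod D A r y $$ es \<cdot>\<^sub>m La)" "j < dim_col (word_prod D A r y $$ es \<cdot>\<^sub>m La)"
          then have ij: "(i,j) \<in> ?B" by (auto simp: La_def)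
          have "?\<phi> (i,j) = fscale (La $$ (i,j)) (?\<phi> es)"
            using someI_ex[OF mult[OF ij]] ij by (simp add: La_def)
          from fun_cong[OF this, of y] show "word_prod D A r y $$ (i,j) = (word_prod D A r y $$ es \<cdot>\<^sub>m La) $$ (i,j)"
            using y ij by (simp add: entryf_def fscale_def La_def)
        qed (use Wc in \<open>auto simp: La_def\<close>)
      qed (simp add: La_def)
    qed
    then obtain La where La: "La \<in> carrier_mat D D" and h: "\<And>y. y \<in> configs d r \<Longrightarrow> \<exists>c. word_prod D A r y = c \<cdot>\<^sub>m La"
      by blast
    have "\<And>w. w \<in> configs d (r * L) \<Longrightarrow> \<exists>c. word_prod D A (r * L) w = c \<cdot>\<^sub>m (La ^\<^sub>m L)"
      by (rule pow_multiple[OF T La h])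
    from no_multiple[OF T inj D2 pow_carrier_mat[OF La] this] show ?thesis by blast
  qed
qed

lemma configs_rS_rC_bij:
  "bij_betw (\<lambda>i. (rS S i, rC S i)) (configs d N) (rS S ` configs d N \<times> rC S ` configs d N)"
proof (rule bij_betw_byWitness[where f' = "\<lambda>(x,y). (\<lambda>n. if n \<in> S then x n else y n)"])
  show "\<forall>a\<in>configs d N. (\<lambda>(x, y) n. if n \<in> S then x n else y n) (rS S a, rC S a) = a"
    by (auto simp: rS_def rC_def fun_eq_iff)
  show "\<forall>a'\<in>rS S ` configs d N \<times> rC S ` configs d N. (rS S (case a' of (x, y) \<Rightarrow> \<lambda>n. if n \<in> S then x n else y n),
            rC S (case a' of (x, y) \<Rightarrow> \<lambda>n. if n \<in> S then x n else y n)) = a'"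
    by (auto simp: rS_def rC_def fun_eq_iff)
  show "(\<lambda>i. (rS S i, rC S i)) ` configs d N \<subseteq> rS S ` configs d N \<times> rC S ` configs d N" by auto
  show "(\<lambda>(x, y) n. if n \<in> S then x n else y n) ` (rS S ` configs d N \<times> rC S ` configs d N) \<subseteq> configs d N"
    by (auto simp: rS_def rC_def configs_def)
qed

lemma sum_rS_rC:
  "(\<Sum>i\<in>configs d N. f (rS S i) * g (rC S i)) = (\<Sum>x\<in>rS S ` configs d N. f x) * (\<Sum>y\<in>rC S ` configs d N. g y :: complex)"
proof -
  have "(\<Sum>i\<in>configs d N. f (rS S i) * g (rC S i)) = (\<Sum>xy\<in>rS S ` configs d N \<times> rC S ` configs d N. f (fst xy) * g (snd xy))"
    using sum.reindex_bij_betw[OF configs_rS_rC_bij, of "\<lambda>xy. f (fst xy) * g (snd xy)"] by simp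
  also have "\<dots> = (\<Sum>x\<in>rS S ` configs d N. \<Sum>y\<in>rC S ` configs d N. f x * g y)"
    unfolding sum.cartesian_product by (intro sum.cong) auto
  also have "\<dots> = (\<Sum>x\<in>rS S ` configs d N. f x) * (\<Sum>y\<in>rC S ` configs d N. g y)"
    by (simp add: sum_product)
  finally show ?thesis .
qed

lemma schmidt_card:
  fixes \<alpha> \<beta> :: "'i \<Rightarrow> (nat \<Rightarrow> nat) \<Rightarrow> complex"
  assumes sr: "schmidt_rank_le d N \<psi> S D" and I: "finite I"
    and dual: "\<And>a b. a \<in> I \<Longrightarrow> b \<in> I \<Longrightarrow>
       (\<Sum>i\<in>configs d N. \<alpha> a (rS S i) * \<beta> b (rC S i) * \<psi> i) = (if a = b then 1 else 0)"
  shows "card I \<le> D"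
proof -
  obtain u v where uv: "\<forall>i\<in>configs d N. \<psi> i = (\<Sum>k<D. u k (rS S i) * v k (rC S i))"
    using sr unfolding schmidt_rank_le_def rS_def rC_def by blast
  let ?X = "rS S ` configs d N" and ?Y = "rC S ` configs d N"
  define P where "P = (\<lambda>a k. \<Sum>x\<in>?X. \<alpha> a x * u k x)"
  define Q where "Q = (\<lambda>k b. \<Sum>y\<in>?Y. \<beta> b y * v k y)"
  show ?thesis
  proof (rule card_le_from_dual[OF I])
    fix a b assume a: "a \<in> I" and b: "b \<in> I"
    have "(\<Sum>k<D. P a k * Q k b) = (\<Sum>k<D. \<Sum>i\<in>configs d N. (\<alpha> a (rS S i) * u k (rS S i)) * (\<beta> b (rC S i) * v k (rC S i)))"
      unfolding P_def Q_def by (rule sum.cong[OF refl], rule sum_rS_rC[symmetric])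
    also have "\<dots> = (\<Sum>i\<in>configs d N. \<alpha> a (rS S i) * \<beta> b (rC S i) * (\<Sum>k<D. u k (rS S i) * v k (rC S i)))"
      by (subst sum.swap) (simp add: sum_distrib_left ac_simps)
    also have "\<dots> = (\<Sum>i\<in>configs d N. \<alpha> a (rS S i) * \<beta> b (rC S i) * \<psi> i)"
      using uv by simp
    also have "\<dots> = (if a = b then 1 else 0)" by (rule dual[OF a b])
    finally show "(\<Sum>k<D. P a k * Q k b) = (if a = b then 1 else 0)" .
  qed
qed

lemma prodm_cong: "(\<And>j. j < n \<Longrightarrow> F j = G j) \<Longrightarrow> prodm D n F = prodm D n G"
proof (induction n arbitrary: F G)
  case 0 then show ?case by simp
next
  case (Suc n)
  have "prodm D n (\<lambda>j. F (Suc j)) = prodm D n (\<lambda>j. G (Suc j))" by (rule Suc.IH) (simp add: Suc.prems)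
  moreover have "F 0 = G 0" by (rule Suc.prems) simp
  ultimately show ?case by simp
qed

lemma prod_ind: "finite A \<Longrightarrow> (\<Prod>j\<in>A. if P j then (1::complex) else 0) = (if \<forall>j\<in>A. P j then 1 else 0)"
  by (induction A rule: finite_induct) auto

lemma main_bound:
  assumes T: "tensor d D1 A" and injL: "injective_block d D1 A L"
    and lv_def: "lv = (\<lambda>j. if j < m then L else r)"
    and N: "N = tot L (Suc m) lv"
    and mps: "exact_mps_up d N (ti_mps D1 A N) D"
    and Tl: "Tl \<subseteq> {..<D1} \<times> {..<D1}"
    and gl: "\<forall>t\<in>Tl. \<forall>e\<in>Tl. LC d D1 A (\<gamma>l t) r $$ e = (if e = t then 1 else 0)"
  shows "(D1^2)^m * card Tl \<le> D"
proof -
  let ?B = "{..<D1} \<times> {..<D1}"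
  let ?n = "Suc m"
  have "\<forall>e\<in>?B. \<exists>c. LC d D1 A c L = Em D1 (fst e) (snd e)" using full_span[OF T injL] by auto
  then obtain \<sigma>U where \<sigma>U: "\<forall>e\<in>?B. LC d D1 A (\<sigma>U e) L = Em D1 (fst e) (snd e)" by (metis bchoice)
  define I where "I = PiE {..<?n} (\<lambda>j. if j < m then ?B else Tl)"
  have finTl: "finite Tl" using Tl by (rule finite_subset) auto
  have finI: "finite I" unfolding I_def using finTl by (intro finite_PiE) auto
  have "card I = (\<Prod>j<?n. card (if j < m then ?B else Tl))" unfolding I_def by (simp add: card_PiE)
  also have "\<dots> = (\<Prod>j<m. card ?B) * card Tl" by (simp add: prod.lessThan_Suc)
  also have "\<dots> = (D1^2)^m * card Tl" by (simp add: card_cartesian_product power2_eq_square)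
  finally have cardI: "card I = (D1^2)^m * card Tl" .
  define S where "S = Sset L ?n lv"
  have "S \<subseteq> {0..<N}" unfolding S_def N by (rule Sset_sub)
  then have sr: "schmidt_rank_le d N (ti_mps D1 A N) S D"
    using mps unfolding exact_mps_up_def by blast
  define P where "P = (\<lambda>(a::nat \<Rightarrow> nat \<times> nat) (j::nat). snd (a (if j = 0 then m else j - 1)))"
  define R where "R = (\<lambda>(a::nat \<Rightarrow> nat \<times> nat) (j::nat). fst (a j))"
  define \<sigma>s where "\<sigma>s = (\<lambda>a j. \<sigma>U (P a j, R a j))"
  define \<gamma>s where "\<gamma>s = (\<lambda>b j. if j < m then \<sigma>U (b j) else \<gamma>l (b j))"
  have aB: "a j \<in> ?B" if "a \<in> I" "j \<le> m" for a j
  proof -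
    have "j \<in> {..<?n}" using that(2) by simp
    from PiE_mem[OF that(1)[unfolded I_def] this] have "a j \<in> (if j < m then ?B else Tl)" by simp
    then show ?thesis using Tl by (cases "j < m") auto
  qed
  have "card I \<le> D"
  proof (rule schmidt_card[OF sr finI, of "\<lambda>a. wS L ?n (\<sigma>s a) lv" "\<lambda>b. wC L ?n (\<gamma>s b) lv"])
    fix a b assume a: "a \<in> I" and b: "b \<in> I"
    define Bm where "Bm = (\<lambda>j. LC d D1 A (\<gamma>s b j) (lv j))"
    have PR: "P a j < D1" "R a j < D1" if "j \<le> m" for j
    proof -
      have h1: "a j \<in> ?B" by (rule aB[OF a that])
      have h2: "a (if j = 0 then m else j - 1) \<in> ?B" by (rule aB[OF a]) (use that in auto)
      show "P a j < D1" "R a j < D1" using h1 h2 unfolding P_def R_def by (auto simp: mem_Times_iff)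
    qed
    have e1: "(\<Sum>i\<in>configs d N. wS L ?n (\<sigma>s a) lv (rS S i) * wC L ?n (\<gamma>s b) lv (rC S i) * ti_mps D1 A N i)
        = (\<Sum>i\<in>configs d N. (wS L ?n (\<sigma>s a) lv i * wC L ?n (\<gamma>s b) lv i) * ti_mps D1 A N i)"
      unfolding S_def by (simp only: wS_rS wC_rC)
    have e2: "(\<Sum>i\<in>configs d N. (wS L ?n (\<sigma>s a) lv i * wC L ?n (\<gamma>s b) lv i) * ti_mps D1 A N i)
        = mtrace (LC d D1 A (\<lambda>i. wS L ?n (\<sigma>s a) lv i * wC L ?n (\<gamma>s b) lv i) N)"
      by (rule mtrace_LC[OF T, symmetric])
    have e3: "LC d D1 A (\<lambda>i. wS L ?n (\<sigma>s a) lv i * wC L ?n (\<gamma>s b) lv i) N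
         = prodm D1 ?n (\<lambda>j. LC d D1 A (\<sigma>s a j) L * LC d D1 A (\<gamma>s b j) (lv j))"
      unfolding N by (rule LC_chain[OF T])
    have e4: "prodm D1 ?n (\<lambda>j. LC d D1 A (\<sigma>s a j) L * LC d D1 A (\<gamma>s b j) (lv j))
       = prodm D1 ?n (\<lambda>j. Em D1 (P a j) (R a j) * Bm j)"
    proof (rule prodm_cong)
      fix j assume "j < ?n"
      then have "(P a j, R a j) \<in> ?B" using PR by auto
      then show "LC d D1 A (\<sigma>s a j) L * LC d D1 A (\<gamma>s b j) (lv j) = Em D1 (P a j) (R a j) * Bm j"
        using \<sigma>U by (simp add: \<sigma>s_def Bm_def)
    qed
    have e5: "prodm D1 ?n (\<lambda>j. Em D1 (P a j) (R a j) * Bm j)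
       = (\<Prod>j<m. Bm j $$ (R a j, P a (Suc j))) \<cdot>\<^sub>m (Em D1 (P a 0) (R a m) * Bm m)"
      by (rule chain_prod) (auto simp: PR Bm_def)
    have e6: "mtrace ((\<Prod>j<m. Bm j $$ (R a j, P a (Suc j))) \<cdot>\<^sub>m (Em D1 (P a 0) (R a m) * Bm m))
       = (\<Prod>j<m. Bm j $$ (R a j, P a (Suc j))) * Bm m $$ (R a m, P a 0)"
      by (rule mtrace_chain) (auto simp: PR Bm_def)
    have e7: "(\<Prod>j<m. Bm j $$ (R a j, P a (Suc j))) = (\<Prod>j<m. if a j = b j then 1 else 0)"
    proof (rule prod.cong[OF refl])
      fix j assume j: "j \<in> {..<m}"
      have bj: "b j \<in> ?B" using aB[OF b, of j] j by simp
      have "Bm j = LC d D1 A (\<sigma>U (b j)) L" using j by (simp add: Bm_def \<gamma>s_def lv_def)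
      also have "\<dots> = Em D1 (fst (b j)) (snd (b j))" by (rule bspec[OF \<sigma>U bj])
      finally have Bmj: "Bm j = Em D1 (fst (b j)) (snd (b j))" .
      then show "Bm j $$ (R a j, P a (Suc j)) = (if a j = b j then 1 else 0)"
      proof -
        have aj: "a j \<in> ?B" using aB[OF a, of j] j by simp
        obtain x y where xy: "a j = (x,y)" by (cases "a j")
        obtain x' y' where xy': "b j = (x',y')" by (cases "b j")
        have xyD: "x < D1" "y < D1" using aj xy by auto
        have "R a j = x" "P a (Suc j) = y" using xy by (simp_all add: R_def P_def)
        moreover have "Em D1 x' y' $$ (x, y) = (if a j = b j then 1 else 0)"
          using xyD xy xy' by (simp add: Em_def)
        ultimately show ?thesis using Bmj xy' by simp
      qed
    qed
    have e8: "Bm m $$ (R a m, P a 0) = (if a m = b m then 1 else 0)"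
    proof -
      have mm: "m \<in> {..<?n}" by simp
      have "a m \<in> Tl" using PiE_mem[OF a[unfolded I_def] mm] by simp
      moreover have "b m \<in> Tl" using PiE_mem[OF b[unfolded I_def] mm] by simp
      ultimately have "a m \<in> Tl" "b m \<in> Tl" by auto
      then have "LC d D1 A (\<gamma>l (b m)) r $$ a m = (if a m = b m then 1 else 0)" using gl by blast
      moreover have "Bm m = LC d D1 A (\<gamma>l (b m)) r" by (simp add: Bm_def \<gamma>s_def lv_def)
      moreover have "(R a m, P a 0) = a m" by (simp add: R_def P_def)
      ultimately show ?thesis by simp
    qed
    have e9: "(\<Prod>j<m. if a j = b j then 1 else 0) * (if a m = b m then 1 else 0) = (if a = b then (1::complex) else 0)"
    proof -
      have "a = b \<longleftrightarrow> (\<forall>j<?n. a j = b j)"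
      proof
        assume h: "\<forall>j<?n. a j = b j"
        show "a = b" by (rule PiE_ext[OF a[unfolded I_def] b[unfolded I_def]]) (use h in auto)
      qed simp
      moreover have "(\<forall>j<?n. a j = b j) \<longleftrightarrow> (\<forall>j\<in>{..<m}. a j = b j) \<and> a m = b m"
        by (auto simp: less_Suc_eq)
      ultimately show ?thesis by (simp add: prod_ind)
    qed
    show "(\<Sum>i\<in>configs d N. wS L ?n (\<sigma>s a) lv (rS S i) * wC L ?n (\<gamma>s b) lv (rC S i) * ti_mps D1 A N i)
       = (if a = b then 1 else 0)"
      unfolding e1 e2 e3 e4 e5 by (simp only: e6, simp only: e7 e8 e9)
  qed
  then show ?thesis using cardI by simp
qed

lemma log_bound: assumes "0 < D" "log 2 (real D) < real q" shows "D < (2::nat)^q"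
proof -
  have "real D < 2 powr real q" using assms by (simp add: log_less_iff)
  then have "real D < 2 ^ q" by (simp add: powr_realpow)
  then show ?thesis by (metis of_nat_less_iff of_nat_numeral of_nat_power)
qed

lemma arith_choice:
  assumes L: "1 \<le> L" and h: "real N > real L * (log 2 (real D) + 1)"
  shows "\<exists>m. ((2*m+2)*L \<le> N \<and> D < 4^(m+1)) \<or> ((2*m+1)*L < N \<and> D < 2*4^m)"
proof -
  define q where "q = N div L"
  have Nq: "N = q*L + N mod L" by (simp add: q_def)
  have modL: "N mod L < L" using L by simp
  have lg: "log 2 (real D) \<ge> 0"
  proof (cases "D = 0")
    case True then show ?thesis by (simp add: log_def)
  next
    case False then show ?thesis by simp
  qed
  have Lpos: "real L > 0" using L by simp
  have "real L * 1 \<le> real L * (log 2 (real D) + 1)" using lg Lpos by (intro mult_left_mono) auto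
  then have NL: "L < N" using h by simp
  have q1: "1 \<le> q" using NL L by (simp add: q_def div_greater_zero_iff Suc_le_eq)
  have "real N < real L * (real q + 1)"
  proof -
    have "N < L * (q + 1)" using Nq modL by (simp add: algebra_simps)
    then have "real N < real (L * (q + 1))" by linarith
    then show ?thesis by (simp add: algebra_simps)
  qed
  then have "real L * (log 2 (real D) + 1) < real L * (real q + 1)" using h by linarith
  then have lq: "log 2 (real D) < real q" using Lpos by (simp add: mult_less_cancel_left_pos)
  have Dq: "D < 2^q"
  proof (cases "D = 0")
    case True then show ?thesis by simp
  next
    case False then show ?thesis using log_bound lq by simp
  qed
  have Dq1: "D < 2^(q-1)" if eq: "N mod L = 0"
  proof -
    have "real N = real L * real q" using Nq eq by simp
    then have "real L * (log 2 (real D) + 1) < real L * real q" using h by linarith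
    then have "log 2 (real D) + 1 < real q" using Lpos by (simp add: mult_less_cancel_left_pos)
    then have l2: "log 2 (real D) < real (q - 1)" using q1 by (simp add: of_nat_diff)
    show ?thesis
    proof (cases "D = 0")
      case True then show ?thesis by simp
    next
      case False then show ?thesis using log_bound l2 by simp
    qed
  qed
  have p4: "(2::nat)^(2*k) = 4^k" for k by (simp add: power_mult)
  consider (ev) k where "q = 2*k" | (od) k where "q = 2*k+1" by (metis oddE evenE)
  then show ?thesis
  proof cases
    case ev
    then obtain j where j: "k = Suc j" using q1 by (cases k) auto
    have "(2*j+2)*L \<le> N" using ev j Nq by (simp add: algebra_simps)
    moreover have "D < 4^(j+1)" using Dq ev j p4[of k] by simp
    ultimately show ?thesis by blast
  next
    case od
    show ?thesis
    proof (cases "N mod L = 0")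
      case False
      have "(2*k+1)*L < N" using od Nq False by simp
      moreover have "D < 2*4^k" using Dq od p4 by (simp add: power_add)
      ultimately show ?thesis by blast
    next
      case True
      obtain j where j: "k = Suc j" using od True Nq NL by (cases k) auto
      then have "(2*j+2)*L \<le> N" using od Nq by (simp add: algebra_simps)
      moreover have "D < 4^(j+1)" using Dq1[OF True] od j p4[of k] by simp
      ultimately show ?thesis by blast
    qed
  qed
qed

lemma tot_formula: "tot L (Suc m) (\<lambda>j. if j < m then L else r) = (2*m+1)*L + r"
  by (induction m) (simp_all add: algebra_simps)

lemma D1_pos: assumes "normal_tensor d D1 A" shows "0 < D1"
proof (rule ccontr)
  assume "\<not> 0 < D1"
  then have z: "D1 = 0" by simp
  from assms[unfolded normal_tensor_def] have "transfer_eigenvalue d D1 A 1" by (elim conjE)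
  then obtain X where X1: "X \<in> carrier_mat D1 D1"
    and X2: "X \<noteq> 0\<^sub>m D1 D1 \<and> transfer_map d D1 A X = 1 \<cdot>\<^sub>m X"
    unfolding transfer_eigenvalue_def by (rule bexE)
  have X: "X \<in> carrier_mat D1 D1" "X \<noteq> 0\<^sub>m D1 D1" using X1 X2 by simp_all
  have "dim_row X = 0" "dim_col X = 0" using X(1) z by auto
  then have "X = 0\<^sub>m D1 D1" using z by (intro eq_matI) auto
  then show False using X(2) by simp
qed

lemma word_prod_1: "tensor d 1 A \<Longrightarrow> \<forall>n<l. i n < d \<Longrightarrow>
   word_prod 1 A l i $$ (0,0) = (\<Prod>n<l. A (i n) $$ (0,0))"
proof (induction l arbitrary: i)
  case 0 then show ?case by (simp add: word_prod_0)
next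
  case (Suc l)
  have sh: "\<forall>n<l. shift 1 i n < d" using Suc.prems(2) by (simp add: shift_def)
  have Wc: "word_prod 1 A l (shift 1 i) \<in> carrier_mat 1 1" by (rule word_prod_carrier'[OF Suc.prems(1) sh])
  have Ac: "A (i 0) \<in> carrier_mat 1 1" using Suc.prems unfolding tensor_def by auto
  have "word_prod 1 A (Suc l) i $$ (0,0) = A (i 0) $$ (0,0) * word_prod 1 A l (shift 1 i) $$ (0,0)"
    unfolding word_prod_Suc by (subst mult_entry[OF Ac Wc]) auto
  also have "word_prod 1 A l (shift 1 i) $$ (0,0) = (\<Prod>n<l. A (i (Suc n)) $$ (0,0))"
    using Suc.IH[OF Suc.prems(1) sh] by (simp add: shift_def)
  finally show ?case by (simp only: prod.lessThan_Suc_shift)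
qed

theorem proposition1:
  fixes d D1 D N LI :: nat and A :: "nat \<Rightarrow> complex mat"
  assumes "normal_tensor d D1 A"
    and "injectivity_length d D1 A LI"
    and "exact_mps_up d N (ti_mps D1 A N) D"
    and "real N > real LI * (log 2 (real D) + 1)"
  shows "\<exists>\<phi> :: nat \<Rightarrow> complex. \<forall>i\<in>configs d N. ti_mps D1 A N i = (\<Prod>n<N. \<phi> (i n))"
proof -
  from assms(1)[unfolded normal_tensor_def] have T: "tensor d D1 A" by (elim conjE)
  have D1p: "0 < D1" by (rule D1_pos[OF assms(1)])
  have il: "1 \<le> LI \<and> (\<forall>L'\<ge>LI. injective_block d D1 A L') \<and>
     (\<forall>L'. 1 \<le> L' \<and> L' < LI \<longrightarrow> \<not> injective_block d D1 A L')"
    using assms(2) unfolding injectivity_length_def by assumption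
  have L1: "1 \<le> LI" using il by (rule conjunct1)
  have injL0: "\<forall>L'\<ge>LI. injective_block d D1 A L'" using il by (rule conjunct1[OF conjunct2])
  have injL: "\<And>l. LI \<le> l \<Longrightarrow> injective_block d D1 A l" using injL0 by blast
  show ?thesis
  proof (cases "D1 = 1")
    case True
    show ?thesis
    proof (intro exI ballI)
      fix i assume i: "i \<in> configs d N"
      have T1: "tensor d 1 A" using T True by simp
      have ib: "\<forall>n<N. i n < d" using i by (simp add: configs_def)
      have Wc: "word_prod 1 A N i \<in> carrier_mat 1 1" by (rule word_prod_carrier'[OF T1 ib])
      have "ti_mps D1 A N i = word_prod 1 A N i $$ (0,0)"
        using Wc True by (simp add: ti_mps_def mtrace_def)
      also have "\<dots> = (\<Prod>n<N. A (i n) $$ (0,0))" by (rule word_prod_1[OF T1 ib])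
      finally show "ti_mps D1 A N i = (\<Prod>n<N. (\<lambda>j. A j $$ (0,0)) (i n))" .
    qed
  next
    case False
    then have D2: "2 \<le> D1" using D1p by simp
    have p4: "(4::nat)^k \<le> (D1^2)^k" for k
    proof -
      have "(4::nat) \<le> D1^2" using D2 power_mono[OF D2, of 2] by simp
      then show ?thesis by (rule power_mono) simp
    qed
    let ?B = "{..<D1} \<times> {..<D1}"
    obtain m where m: "((2*m+2)*LI \<le> N \<and> D < 4^(m+1)) \<or> ((2*m+1)*LI < N \<and> D < 2*4^m)"
      using arith_choice[OF L1 assms(4)] by blast
    define r where "r = N - (2*m+1)*LI"
    define lv where "lv = (\<lambda>j. if j < m then LI else r)"
    have "False"
    proof (cases "(2*m+2)*LI \<le> N \<and> D < 4^(m+1)")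
      case True
      have "(2*m+2)*LI = (2*m+1)*LI + LI" by (simp add: algebra_simps)
      then have rL: "LI \<le> r" using True unfolding r_def by arith
      have Neq: "N = tot LI (Suc m) lv" unfolding lv_def tot_formula using True by (simp add: r_def)
      have "\<forall>t\<in>?B. \<exists>c. LC d D1 A c r = Em D1 (fst t) (snd t)"
        using full_span[OF T injL[OF rL]] by auto
      then obtain \<gamma>l where gl0: "\<forall>t\<in>?B. LC d D1 A (\<gamma>l t) r = Em D1 (fst t) (snd t)" by (metis bchoice)
      have gl: "\<forall>t\<in>?B. \<forall>e\<in>?B. LC d D1 A (\<gamma>l t) r $$ e = (if e = t then 1 else 0)"
      proof (intro ballI)
        fix t e assume t: "t \<in> ?B" and e: "e \<in> ?B"
        have "LC d D1 A (\<gamma>l t) r = Em D1 (fst t) (snd t)" by (rule bspec[OF gl0 t])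
        then show "LC d D1 A (\<gamma>l t) r $$ e = (if e = t then 1 else 0)"
          using e by (cases e, cases t) (simp add: Em_def)
      qed
      have cB: "card ?B = D1^2" by (simp add: power2_eq_square)
      have "(D1^2)^m * card ?B \<le> D"
        by (rule main_bound[OF T injL[OF order_refl] lv_def Neq assms(3) order_refl gl])
      then have a1: "(D1^2)^m * D1^2 \<le> D" by (simp only: cB)
      have a2: "(D1^2)^m * D1^2 = (D1^2)^(m+1)" by (simp only: power_add power_one_right)
      have a3: "4^(m+1) \<le> (D1^2)^(m+1)" by (rule p4)
      show False using True a1 a2 a3 by linarith
    next
      case False
      then have O: "(2*m+1)*LI < N" "D < 2*4^m" using m by auto
      have r1: "1 \<le> r" using O by (simp add: r_def)
      have Neq: "N = tot LI (Suc m) lv" unfolding lv_def tot_formula using O by (simp add: r_def)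
      have "LI \<le> r * LI" using r1 by simp
      obtain E where E: "E \<subseteq> ?B" "card E = 2"
        and fam: "\<forall>t\<in>E. \<exists>\<gamma>. \<forall>e\<in>E. LC d D1 A \<gamma> r $$ e = (if e = t then 1 else 0)"
        using short_family[OF T D2 r1 injL[OF \<open>LI \<le> r * LI\<close>]] by blast
      obtain \<gamma>l where gl: "\<forall>t\<in>E. \<forall>e\<in>E. LC d D1 A (\<gamma>l t) r $$ e = (if e = t then 1 else 0)"
        using bchoice[OF fam] by blast
      have "(D1^2)^m * card E \<le> D"
        by (rule main_bound[OF T injL[OF order_refl] lv_def Neq assms(3) E(1) gl])
      then have "(D1^2)^m * 2 \<le> D" using E(2) by simp
      moreover have "4^m * 2 \<le> (D1^2)^m * 2" using p4[of m] by simp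
      ultimately show False using O by simp
    qed
    then show ?thesis ..
  qed
qed

end
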